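(* Assume the model (M.2) with $M_0>1$ and the sub-Gaussian condition (A.4) described in the context, and let Algorithm 2 be applied to $X_1,\ldots,X_N$. Let $k\in\{2,\ldots,M_0\}$ and let $\eta=\eta(N)$ be an integer with $1\le\eta\le\min\{N_{k-1},N_{k+1}\}$. Let $E_{k,N}$ be the event that there exist integers $1\le n_1\le N_k$, $1\le n_2\le\eta$, $1\le n_3\le\eta$ such that $\{X^{(k-1)}_n:n=N_{k-1}-n_3+1,\ldots,N_{k-1}\}\cup\{X^{(k)}_n:n=1,\ldots,n_1\}$ and $\{X^{(k)}_n:n=n_1+1,\ldots,N_k\}\cup\{X^{(k+1)}_n:n=1,\ldots,n_2\}$ are two detected segments. Assume $$f(N)\ge\max\{100|\mu_{k-1}-\mu_k|^2\eta,\ 100|\mu_k-\mu_{k+1}|^2\eta,\ C\log N\},$$ where $C>100D/c_0$ is a constant. Then $\Pr(\limsup_{N\to\infty}E_{k,N})=0$.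
   Context: Model (M.2): for each sample size $N$ one observes independent random vectors $X_1,\ldots,X_N\in\mathbb{R}^D$ ($D\in\mathbb{N}$ fixed). There are $M_0\ge 0$ (fixed) change points $0=L_0<L_1<\cdots<L_{M_0}<L_{M_0+1}=N$ (depending on $N$), with segment sizes $N_k=L_k-L_{k-1}$, $N_k\to\infty$; for each $k$, $X_{L_{k-1}+1},\ldots,X_{L_k}$ are i.i.d. with distribution $\mathcal{G}_k$ with mean $\mu_k$ and finite covariance; $\mu_k\neq\mu_{k+1}$. Write $X^{(k)}_n=X_{L_{k-1}+n}$, $n=1,\ldots,N_k$. (A.4): there is $c_0>0$ such that for every $k$, coordinate $d$, $n\ge1$ and $a>0$, the mean $\bar Z$ of $n$ i.i.d. copies of the $d$-th marginal of $\mathcal{G}_k$ satisfies $\Pr(|\bar Z-E\bar Z|\ge a)\le2e^{-c_0a^2n}$. Quadratic loss: $\mathrm{Loss}_q(x_a,\ldots,x_b)=\sum_{n=a}^b|x_n-\bar x|^2$, $\bar x$ the sample mean, $|\cdot|$ Euclidean norm. Algorithm 2 (inputs $M_{\max}\ge1$, penalty $f(N)>0$, minimal segment size $\beta(N)$): for $k=0,1,\ldots,M_{\max}$ compute $\hat e_k=\min\sum_{j=1}^{k+1}\mathrm{Loss}_q(x_{\ell_{j-1}+1},\ldots,x_{\ell_j})$ over $0=\ell_0<\ell_1<\cdots<\ell_{k+1}=N$ with a minimizer; if its smallest segment has size $<\beta(N)$, set $M=k-1$ and stop (else $M=M_{\max}$). Output $\hat M=\arg\min_{0\le k\le M}(\hat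 e_k+kf(N))$ and the change points $\hat\ell_1<\cdots<\hat\ell_{\hat M}$ of the minimizer for $k=\hat M$. The detected segments are the blocks $\{X_n:n=\hat\ell_{j-1}+1,\ldots,\hat\ell_j\}$, $j=1,\ldots,\hat M+1$ ($\hat\ell_0=0,\hat\ell_{\hat M+1}=N$); "two detected segments" means two neighboring ones, in the order listed. $\limsup_N E_N$ is the event that $E_N$ occurs for infinitely many $N$. *)

theory Defs
  imports "HOL-Probability.Probability"
begin

text \<open>Data are indexed 1..N: x :: nat \<Rightarrow> real^'d, the observation x n for n = 1..N.\<close>

definition seg_mean :: "(nat \<Rightarrow> real^'d) \<Rightarrow> nat \<Rightarrow> nat \<Rightarrow> real^'d" where
  "seg_mean x a b = (1 / real (b + 1 - a)) *\<^sub>R (\<Sum>n\<in>{a..b}. x n)"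

definition loss_q :: "(nat \<Rightarrow> real^'d) \<Rightarrow> nat \<Rightarrow> nat \<Rightarrow> real" where
  "loss_q x a b = (\<Sum>n\<in>{a..b}. (norm (x n - seg_mean x a b))\<^sup>2)"

text \<open>A segmentation with k change points: 0 = l 0 < l 1 < ... < l (k+1) = N
  (values of l beyond k+1 are irrelevant).\<close>
definition valid_seg :: "nat \<Rightarrow> nat \<Rightarrow> (nat \<Rightarrow> nat) \<Rightarrow> bool" where
  "valid_seg N k l \<longleftrightarrow> l 0 = 0 \<and> l (Suc k) = N \<and> (\<forall>j\<le>k. l j < l (Suc j))"

definition seg_cost :: "(nat \<Rightarrow> real^'d) \<Rightarrow> nat \<Rightarrow> (nat \<Rightarrow> nat) \<Rightarrow> real" where
  "seg_cost x k l = (\<Sum>j\<in>{1..Suc k}. loss_q x (l (j - 1) + 1) (l j))"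

definition min_seg_size :: "nat \<Rightarrow> (nat \<Rightarrow> nat) \<Rightarrow> nat" where
  "min_seg_size k l = Min ((\<lambda>j. l (Suc j) - l j) ` {..k})"

text \<open>(Mhat, lh) is a possible output of Algorithm 2 with inputs Mmax, penalty pen = f(N),
  minimal segment size beta = beta(N), on data x_1..x_N, for SOME choice of minimizers
  (sel k) and some choice of argmin. K is the last value of k for which the loop computed
  a minimizer; Mst is the value M at which the loop ended (nat convention: 0 - 1 = 0).\<close>
definition alg2_output ::
  "nat \<Rightarrow> real \<Rightarrow> nat \<Rightarrow> nat \<Rightarrow> (nat \<Rightarrow> real^'d) \<Rightarrow> nat \<Rightarrow> (nat \<Rightarrow> nat) \<Rightarrow> bool" where
  "alg2_output Mmax pen beta N x Mhat lh \<longleftrightarrow>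
     (\<exists>sel :: nat \<Rightarrow> nat \<Rightarrow> nat. \<exists>K Mst.
        K \<le> Mmax \<and>
        (\<forall>k\<le>K. valid_seg N k (sel k) \<and>
                 (\<forall>l. valid_seg N k l \<longrightarrow> seg_cost x k (sel k) \<le> seg_cost x k l)) \<and>
        (\<forall>k<K. beta \<le> min_seg_size k (sel k)) \<and>
        (if beta \<le> min_seg_size K (sel K) then K = Mmax \<and> Mst = Mmax else Mst = K - 1) \<and>
        Mhat \<le> Mst \<and>
        (\<forall>k\<le>Mst. seg_cost x Mhat (sel Mhat) + real Mhat * pen
                   \<le> seg_cost x k (sel k) + real k * pen) \<and>
        (\<forall>j\<le>Suc Mhat. lh j = sel Mhat j))"

end

theory Submission
  imports Defs
begin


lemma block_prob:
  fixes M :: "'a measure" and Y :: "nat \<Rightarrow> 'a \<Rightarrow> real^'d" and G :: "(real^'d) measure"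
  assumes P: "prob_space M"
    and rv: "\<And>n. Y n \<in> borel_measurable M"
    and ind: "prob_space.indep_vars M (\<lambda>_. borel) Y I"
    and sub: "{s..e} \<subseteq> I" and se: "s \<le> e"
    and dist: "\<And>n. n \<in> {s..e} \<Longrightarrow> distr M borel (Y n) = G"
    and sg: "\<And>n a. n \<ge> 1 \<Longrightarrow> a > 0 \<Longrightarrow>
        measure (PiM {..<n} (\<lambda>_. G))
          {z \<in> space (PiM {..<n} (\<lambda>_. G)). \<bar>(\<Sum>i<n. z i $ d) / real n - mu $ d\<bar> \<ge> a}
        \<le> 2 * exp (- c0 * a\<^sup>2 * real n)"
    and t: "t > 0"
  shows "measure M {\<omega>\<in>space M. t * real (e + 1 - s) < (\<Sum>i=s..e. Y i \<omega> $ d - mu $ d)\<^sup>2}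
          \<le> 2 * exp (- c0 * t)"
proof -
  interpret prob_space M by fact
  define J where "J = {s..e}"
  define m where "m = e + 1 - s"
  have m1: "m \<ge> 1" using se by (simp add: m_def)
  have Jne: "J \<noteq> {}" using se by (auto simp: J_def)
  have G: "G = distr M borel (Y s)" using dist[of s] se by auto
  have Gprob: "prob_space G" unfolding G by (rule prob_space_distr) (simp add: rv)
  have setsG: "sets G = sets borel" by (simp add: G)
  have spG: "space G = UNIV" by (simp add: G)
  have indJ: "indep_vars (\<lambda>_. borel) Y J" using indep_vars_subset[OF ind] sub by (auto simp: J_def)
  have D1: "distr M (\<Pi>\<^sub>M i\<in>J. borel) (\<lambda>x. \<lambda>i\<in>J. Y i x) = (\<Pi>\<^sub>M i\<in>J. distr M borel (Y i))"
    using indep_vars_iff_distr_eq_PiM[OF Jne, where M'="\<lambda>_. borel" and X=Y] indJ rv by auto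
  also have "\<dots> = (\<Pi>\<^sub>M i\<in>J. G)" by (rule PiM_cong) (auto simp: J_def dist)
  finally have D2: "distr M (\<Pi>\<^sub>M i\<in>J. borel) (\<lambda>x. \<lambda>i\<in>J. Y i x) = (\<Pi>\<^sub>M i\<in>J. G)" .
  have R: "distr (\<Pi>\<^sub>M i\<in>J. G) (\<Pi>\<^sub>M i\<in>{..<m}. G) (\<lambda>\<omega>. \<lambda>n\<in>{..<m}. \<omega> (s + n)) = (\<Pi>\<^sub>M i\<in>{..<m}. G)"
  proof -
    have "(\<lambda>n. s + n) \<in> {..<m} \<rightarrow> J" by (auto simp: J_def m_def)
    moreover have "inj_on (\<lambda>n. s + n) {..<m}" by (auto simp: inj_on_def)
    ultimately show ?thesis using distr_PiM_reindex[of J "\<lambda>_. G" "\<lambda>n. s + n" "{..<m}"] Gprob by auto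
  qed
  define W where "W = (\<lambda>\<omega>. \<lambda>n\<in>{..<m}. Y (s + n) \<omega>)"
  have measZ: "(\<lambda>x. \<lambda>i\<in>J. Y i x) \<in> measurable M (\<Pi>\<^sub>M i\<in>J. borel)"
    by (rule measurable_restrict) (simp add: rv)
  have measR: "(\<lambda>\<omega>. \<lambda>n\<in>{..<m}. \<omega> (s + n)) \<in> measurable (\<Pi>\<^sub>M i\<in>J. borel) (\<Pi>\<^sub>M i\<in>{..<m}. G)"
  proof -
    have "(\<lambda>\<omega>. \<lambda>n\<in>{..<m}. \<omega> (s + n)) \<in> measurable (\<Pi>\<^sub>M i\<in>J. borel) (\<Pi>\<^sub>M i\<in>{..<m}. borel)"
      by (rule measurable_restrict) (auto simp: J_def m_def intro!: measurable_component_singleton)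
    moreover have "sets (\<Pi>\<^sub>M i\<in>{..<m}. G) = sets (\<Pi>\<^sub>M i\<in>{..<m}. (borel :: (real^'d) measure))"
      by (rule sets_PiM_cong) (auto simp: setsG)
    ultimately show ?thesis using measurable_cong_sets by blast
  qed
  have DW: "distr M (\<Pi>\<^sub>M i\<in>{..<m}. G) W = (\<Pi>\<^sub>M i\<in>{..<m}. G)"
  proof -
    have "distr M (\<Pi>\<^sub>M i\<in>{..<m}. G) W
       = distr M (\<Pi>\<^sub>M i\<in>{..<m}. G) ((\<lambda>\<omega>. \<lambda>n\<in>{..<m}. \<omega> (s + n)) \<circ> (\<lambda>x. \<lambda>i\<in>J. Y i x))"
      by (rule arg_cong[where f="distr M _"]) (auto simp: W_def J_def m_def fun_eq_iff)
    also have "\<dots> = distr (distr M (\<Pi>\<^sub>M i\<in>J. borel) (\<lambda>x. \<lambda>i\<in>J. Y i x)) (\<Pi>\<^sub>M i\<in>{..<m}. G) (\<lambda>\<omega>. \<lambda>n\<in>{..<m}. \<omega> (s + n))"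
      by (rule distr_distr[symmetric, OF measR measZ])
    also have "\<dots> = (\<Pi>\<^sub>M i\<in>{..<m}. G)" unfolding D2 R ..
    finally show ?thesis .
  qed
  have Weq: "W = (\<lambda>\<omega>. \<lambda>n\<in>{..<m}. \<omega> (s + n)) \<circ> (\<lambda>x. \<lambda>i\<in>J. Y i x)"
    by (auto simp: W_def J_def m_def fun_eq_iff)
  have measW: "W \<in> measurable M (\<Pi>\<^sub>M i\<in>{..<m}. G)"
    unfolding Weq by (rule measurable_comp[OF measZ measR])
  define a where "a = sqrt (t / m)"
  have apos: "a > 0" using t m1 by (simp add: a_def)
  have a2: "a\<^sup>2 * real m = t" using t m1 by (simp add: a_def)
  define E where "E = {z \<in> space (PiM {..<m} (\<lambda>_. G)). \<bar>(\<Sum>i<m. z i $ d) / real m - mu $ d\<bar> \<ge> a}"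
  have Emeas: "E \<in> sets (PiM {..<m} (\<lambda>_. G))"
  proof -
    have "(\<lambda>z. (\<Sum>i<m. z i $ d)) \<in> borel_measurable (PiM {..<m} (\<lambda>_. G))"
      by (intro borel_measurable_sum measurable_compose[OF measurable_component_singleton])
         (auto simp: measurable_cong_sets[OF setsG refl])
    then show ?thesis unfolding E_def by measurable
  qed
  have sub2: "{\<omega>\<in>space M. t * real (e + 1 - s) < (\<Sum>i=s..e. Y i \<omega> $ d - mu $ d)\<^sup>2} \<subseteq> W -` E \<inter> space M"
  proof
    fix \<omega> assume w: "\<omega> \<in> {\<omega>\<in>space M. t * real (e + 1 - s) < (\<Sum>i=s..e. Y i \<omega> $ d - mu $ d)\<^sup>2}"
    define S where "S = (\<Sum>i=s..e. Y i \<omega> $ d - mu $ d)"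
    have tS: "t * real m < S\<^sup>2" using w by (simp add: S_def m_def)
    have "(\<Sum>i<m. W \<omega> i $ d) = (\<Sum>i<m. Y (s + i) \<omega> $ d)" by (simp add: W_def)
    also have "\<dots> = (\<Sum>i=s..e. Y i \<omega> $ d)"
    proof -
      have "(\<Sum>i=s..e. Y i \<omega> $ d) = (\<Sum>i=s..<Suc e. Y i \<omega> $ d)"
        by (simp add: atLeastLessThanSuc_atLeastAtMost)
      also have "\<dots> = (\<Sum>i=0..<Suc e - s. Y (s + i) \<omega> $ d)"
        by (simp only: sum.atLeastLessThan_shift_0[of _ s] comp_def)
      finally show ?thesis by (simp add: m_def lessThan_atLeast0)
    qed
    finally have "(\<Sum>i<m. W \<omega> i $ d) / real m - mu $ d = S / real m"
      using m1 se by (simp add: S_def sum_subtractf m_def field_simps)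
    moreover have "a \<le> \<bar>S / real m\<bar>"
    proof -
      have mp: "real m > 0" using m1 by simp
      have "a\<^sup>2 = t / real m" using t mp by (simp add: a_def)
      also have "t / real m < S\<^sup>2 / (real m)\<^sup>2"
        using tS mp by (simp add: field_simps power2_eq_square)
      also have "\<dots> = \<bar>S / real m\<bar>\<^sup>2" by (simp add: power_divide)
      finally have "a\<^sup>2 < \<bar>S / real m\<bar>\<^sup>2" .
      then have "a < \<bar>S / real m\<bar>" by (rule power_less_imp_less_base) simp
      then show ?thesis by simp
    qed
    ultimately have "W \<omega> \<in> E" using w by (auto simp: E_def W_def space_PiM spG)
    then show "\<omega> \<in> W -` E \<inter> space M" using w by auto
  qed
  have "measure M {\<omega>\<in>space M. t * real (e + 1 - s) < (\<Sum>i=s..e. Y i \<omega> $ d - mu $ d)\<^sup>2}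
        \<le> measure M (W -` E \<inter> space M)"
    by (rule finite_measure_mono[OF sub2]) (rule measurable_sets[OF measW Emeas])
  also have "\<dots> = measure (distr M (\<Pi>\<^sub>M i\<in>{..<m}. G) W) E" by (rule measure_distr[symmetric, OF measW Emeas])
  also have "\<dots> = measure (PiM {..<m} (\<lambda>_. G)) E" by (simp add: DW)
  also have "\<dots> \<le> 2 * exp (- c0 * a\<^sup>2 * real m)" unfolding E_def by (rule sg[OF m1 apos])
  also have "\<dots> = 2 * exp (- c0 * t)" using a2 by (simp add: mult.assoc)
  finally show ?thesis .
qed


lemma sumsq_decomp:
  fixes x :: "nat \<Rightarrow> real^'d"
  assumes pq: "p \<le> q"
  shows "(\<Sum>n\<in>{p..q}. (norm (x n - c))\<^sup>2)
       = loss_q x p q + (norm (\<Sum>n\<in>{p..q}. x n - c))\<^sup>2 / real (q + 1 - p)"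
proof -
  define m where "m = real (q + 1 - p)"
  have mp: "m > 0" using pq by (simp add: m_def)
  have cardI: "real (card {p..q}) = m" using pq by (simp add: m_def)
  define S where "S = (\<Sum>n\<in>{p..q}. x n)"
  define mu where "mu = seg_mean x p q"
  have mu: "mu = (1 / m) *\<^sub>R S" by (simp add: mu_def seg_mean_def S_def m_def)
  have S: "S = m *\<^sub>R mu" using mp by (simp add: mu)
  have "(\<Sum>n\<in>{p..q}. (norm (x n - c))\<^sup>2)
      = (\<Sum>n\<in>{p..q}. (norm (x n - mu))\<^sup>2 + 2 * inner (x n - mu) (mu - c) + (norm (mu - c))\<^sup>2)"
  proof (rule sum.cong[OF refl])
    fix n
    have e: "x n - c = (x n - mu) + (mu - c)" by simp
    show "(norm (x n - c))\<^sup>2 = (norm (x n - mu))\<^sup>2 + 2 * inner (x n - mu) (mu - c) + (norm (mu - c))\<^sup>2"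
      unfolding e power2_norm_eq_inner inner_add_left inner_add_right
      by (simp add: inner_commute)
  qed
  also have "\<dots> = loss_q x p q + 2 * inner (\<Sum>n\<in>{p..q}. x n - mu) (mu - c) + m * (norm (mu - c))\<^sup>2"
    by (simp add: sum.distrib loss_q_def mu_def m_def sum_distrib_left inner_sum_left)
  also have "(\<Sum>n\<in>{p..q}. x n - mu) = 0"
    by (simp add: sum_subtractf S_def[symmetric] S m_def sum_constant_scaleR del: sum_constant)
  also have "m * (norm (mu - c))\<^sup>2 = (norm (\<Sum>n\<in>{p..q}. x n - c))\<^sup>2 / real (q + 1 - p)"
  proof -
    have "(\<Sum>n\<in>{p..q}. x n - c) = m *\<^sub>R (mu - c)"
      by (simp add: sum_subtractf S_def[symmetric] S m_def sum_constant_scaleR scaleR_diff_right del: sum_constant)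
    moreover have mm: "real (q + 1 - p) = m" by (simp add: m_def)
    ultimately show ?thesis using mp unfolding mm by (simp add: power2_eq_square)
  qed
  finally show ?thesis by simp
qed

lemma merge_bound:
  fixes x :: "nat \<Rightarrow> real^'d"
  assumes "p \<le> r" "r < q"
  shows "loss_q x p q \<le> loss_q x p r + loss_q x (Suc r) q
     + (norm (\<Sum>n\<in>{p..r}. x n - c))\<^sup>2 / real (r + 1 - p)
     + (norm (\<Sum>n\<in>{Suc r..q}. x n - c))\<^sup>2 / real (q + 1 - Suc r)"
proof -
  have "loss_q x p q \<le> (\<Sum>n\<in>{p..q}. (norm (x n - c))\<^sup>2)"
    using sumsq_decomp[of p q x c] assms by simp
  also have "\<dots> = (\<Sum>n\<in>{p..r}. (norm (x n - c))\<^sup>2) + (\<Sum>n\<in>{Suc r..q}. (norm (x n - c))\<^sup>2)"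
  proof -
    have "{p..q} = {p..r} \<union> {Suc r..q}" using assms by auto
    then show ?thesis by (simp add: sum.union_disjoint)
  qed
  also have "\<dots> = loss_q x p r + loss_q x (Suc r) q
     + (norm (\<Sum>n\<in>{p..r}. x n - c))\<^sup>2 / real (r + 1 - p)
     + (norm (\<Sum>n\<in>{Suc r..q}. x n - c))\<^sup>2 / real (q + 1 - Suc r)"
    using sumsq_decomp[of p r x c] sumsq_decomp[of "Suc r" q x c] assms by simp
  finally show ?thesis .
qed



lemma split3:
  fixes h :: "nat \<Rightarrow> real"
  assumes "1 \<le> j" "j \<le> n"
  shows "sum h {1..n} = sum h {1..<j} + h j + sum h {Suc j..n}"
proof -
  have "{1..n} = {1..<j} \<union> {j..n}" using assms by auto
  then have "sum h {1..n} = sum h {1..<j} + sum h {j..n}" by (simp, subst sum.union_disjoint) auto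
  also have "sum h {j..n} = h j + sum h {Suc j..n}" using assms by (simp add: sum.atLeast_Suc_atMost)
  finally show ?thesis by simp
qed

lemma delete_cp:
  fixes x :: "nat \<Rightarrow> real^'d"
  assumes v: "valid_seg N (Suc K) l" and j: "1 \<le> j" "j \<le> Suc K"
  defines "l' \<equiv> (\<lambda>i. if i < j then l i else l (Suc i))"
  shows "valid_seg N K l'"
    and "seg_cost x K l' + loss_q x (l (j - 1) + 1) (l j) + loss_q x (l j + 1) (l (Suc j))
         = seg_cost x (Suc K) l + loss_q x (l (j - 1) + 1) (l (Suc j))"
proof -
  show "valid_seg N K l'"
    unfolding valid_seg_def
  proof (intro conjI allI impI)
    show "l' 0 = 0" using v j by (simp add: valid_seg_def l'_def)
    show "l' (Suc K) = N" using v j by (simp add: valid_seg_def l'_def)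
    fix i assume i: "i \<le> K"
    have m: "\<And>i. i \<le> Suc K \<Longrightarrow> l i < l (Suc i)" using v by (simp add: valid_seg_def)
    show "l' i < l' (Suc i)"
    proof (cases "Suc i < j")
      case True then show ?thesis using m[of i] i by (simp add: l'_def)
    next
      case False
      show ?thesis
      proof (cases "i < j")
        case True
        then have "i = j - 1" "Suc i = j" using False by auto
        then show ?thesis using m[of i] m[of "Suc i"] i j True False by (simp add: l'_def)
      next
        case False2: False
        then show ?thesis using m[of "Suc i"] i False by (simp add: l'_def)
      qed
    qed
  qed
  define g where "g = (\<lambda>i. loss_q x (l (i - 1) + 1) (l i))"
  define g' where "g' = (\<lambda>i. loss_q x (l' (i - 1) + 1) (l' i))"
  have c1: "seg_cost x K l' = sum g' {1..<j} + g' j + sum g' {Suc j..Suc K}"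
    unfolding seg_cost_def g'_def[symmetric] by (rule split3[OF j])
  have c2: "seg_cost x (Suc K) l = sum g {1..<j} + g j + sum g {Suc j..Suc (Suc K)}"
    unfolding seg_cost_def g_def[symmetric] by (rule split3) (use j in auto)
  have e1: "sum g' {1..<j} = sum g {1..<j}"
    by (rule sum.cong) (auto simp: g_def g'_def l'_def)
  have e2: "g' j = loss_q x (l (j - 1) + 1) (l (Suc j))"
    using j by (simp add: g'_def l'_def)
  have e3: "sum g' {Suc j..Suc K} = sum g {Suc (Suc j)..Suc (Suc K)}"
  proof -
    have "sum g' {Suc j..Suc K} = sum (\<lambda>i. g (Suc i)) {Suc j..Suc K}"
      by (rule sum.cong) (auto simp: g_def g'_def l'_def)
    also have "\<dots> = sum g {Suc (Suc j)..Suc (Suc K)}"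
      by (rule sum.shift_bounds_cl_Suc_ivl[symmetric])
    finally show ?thesis .
  qed
  have e4: "sum g {Suc j..Suc (Suc K)} = g (Suc j) + sum g {Suc (Suc j)..Suc (Suc K)}"
    by (rule sum.atLeast_Suc_atMost) (use j in simp)
  show "seg_cost x K l' + loss_q x (l (j - 1) + 1) (l j) + loss_q x (l j + 1) (l (Suc j))
         = seg_cost x (Suc K) l + loss_q x (l (j - 1) + 1) (l (Suc j))"
    unfolding c1 c2 e1 e2 e3 e4 by (simp add: g_def)
qed


lemma nsq: "(norm (v::real^'d))\<^sup>2 = (\<Sum>d\<in>UNIV. (v $ d)\<^sup>2)"
  by (simp add: norm_vec_def L2_set_def sum_nonneg)

lemma vec_good:
  fixes x :: "nat \<Rightarrow> real^'d"
  assumes "\<And>d. (\<Sum>i=s..e. x i $ d - mu $ d)\<^sup>2 \<le> t * real (e + 1 - s)"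
  shows "(norm (\<Sum>i=s..e. x i - mu))\<^sup>2 \<le> real CARD('d) * t * real (e + 1 - s)"
proof -
  have "(norm (\<Sum>i=s..e. x i - mu))\<^sup>2 = (\<Sum>d\<in>UNIV. (\<Sum>i=s..e. x i $ d - mu $ d)\<^sup>2)"
    by (simp add: nsq)
  also have "\<dots> \<le> (\<Sum>d\<in>(UNIV::'d set). t * real (e + 1 - s))"
    by (rule sum_mono) (rule assms)
  finally show ?thesis by simp
qed

lemma sq3: "((p::real) + q + r)\<^sup>2 \<le> 3 * (p\<^sup>2 + q\<^sup>2 + r\<^sup>2)"
proof -
  have "0 \<le> (p - q)\<^sup>2 + (q - r)\<^sup>2 + (p - r)\<^sup>2" by simp
  then show ?thesis by (simp add: power2_eq_square algebra_simps)
qed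

lemma tri_bound:
  fixes U V W :: "real^'d"
  assumes "(norm U)\<^sup>2 \<le> T * a" "(norm W)\<^sup>2 \<le> T * b" "T \<ge> 0" "a \<ge> 0" "b \<ge> 0"
    and "g \<ge> 0" "g \<le> a + b" "a + b > 0"
  shows "(norm (U + g *\<^sub>R v + W))\<^sup>2 / (a + b) \<le> 3 * T + 3 * g * (norm v)\<^sup>2"
proof -
  have "norm (U + g *\<^sub>R v + W) \<le> norm U + g * norm v + norm W"
    using norm_triangle_ineq[of "U + g *\<^sub>R v" W] norm_triangle_ineq[of U "g *\<^sub>R v"] assms(6) by simp
  then have "(norm (U + g *\<^sub>R v + W))\<^sup>2 \<le> (norm U + g * norm v + norm W)\<^sup>2"
    by (simp add: power_mono)
  also have "\<dots> \<le> 3 * ((norm U)\<^sup>2 + (g * norm v)\<^sup>2 + (norm W)\<^sup>2)"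
    by (rule sq3)
  also have "\<dots> \<le> 3 * (T * (a + b) + g * (a + b) * (norm v)\<^sup>2)"
  proof -
    have "(g * norm v)\<^sup>2 \<le> g * (a + b) * (norm v)\<^sup>2"
    proof -
      have "g * g \<le> g * (a + b)" using assms by (simp add: mult_left_mono)
      then have "g * g * (norm v)\<^sup>2 \<le> g * (a + b) * (norm v)\<^sup>2" by (rule mult_right_mono) simp
      then show ?thesis by (simp add: power_mult_distrib power2_eq_square mult.commute mult.left_commute)
    qed
    then show ?thesis using assms by (simp add: algebra_simps)
  qed
  finally show ?thesis using assms by (simp add: divide_le_eq algebra_simps)
qed

lemma lin4: "(f::real) \<le> a - b - c \<Longrightarrow> a \<le> b + c + u + v \<Longrightarrow> u \<le> u' \<Longrightarrow> v \<le> v' \<Longrightarrow> f \<le> u' + v'"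
  by linarith

theorem lemma6:
  fixes M :: "'a measure"
    and X :: "nat \<Rightarrow> nat \<Rightarrow> 'a \<Rightarrow> real^'d"
    and L :: "nat \<Rightarrow> nat \<Rightarrow> nat"
    and M0 :: nat and N0 :: nat
    and G :: "nat \<Rightarrow> (real^'d) measure"
    and \<mu> :: "nat \<Rightarrow> real^'d"
    and c0 :: real and C :: real
    and Mmax :: nat and f :: "nat \<Rightarrow> real" and \<beta> :: "nat \<Rightarrow> nat"
    and k :: nat and \<eta> :: "nat \<Rightarrow> nat"
    and out :: "nat \<Rightarrow> 'a \<Rightarrow> nat \<times> (nat \<Rightarrow> nat)"
  assumes P: "prob_space M"
    \<comment> \<open>model (M.2)\<close>
    and M0: "M0 > 1"
    and L_struct: "\<forall>N\<ge>N0. L N 0 = 0 \<and> L N (Suc M0) = N \<and> (\<forall>j\<le>M0. L N j < L N (Suc j))"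
    and seg_inf: "\<forall>j\<in>{1..Suc M0}. filterlim (\<lambda>N. L N j - L N (j - 1)) at_top sequentially"
    and rv: "\<forall>N n. X N n \<in> borel_measurable M"
    and indep: "\<forall>N\<ge>N0. prob_space.indep_vars M (\<lambda>_. borel) (X N) {1..N}"
    and distr_X: "\<forall>N\<ge>N0. \<forall>j\<in>{1..Suc M0}. \<forall>n. L N (j - 1) < n \<and> n \<le> L N j \<longrightarrow>
                    distr M borel (X N n) = G j"
    and G_prob: "\<forall>j\<in>{1..Suc M0}. prob_space (G j)"
    and G_mean: "\<forall>j\<in>{1..Suc M0}. integrable (G j) (\<lambda>x. x) \<and> \<mu> j = (\<integral>x. x \<partial>G j)"
    and G_cov: "\<forall>j\<in>{1..Suc M0}. integrable (G j) (\<lambda>x. (norm x)\<^sup>2)"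
    and mu_change: "\<forall>j\<in>{1..M0}. \<mu> j \<noteq> \<mu> (Suc j)"
    \<comment> \<open>(A.4)\<close>
    and c0: "c0 > 0"
    and subgauss: "\<forall>j\<in>{1..Suc M0}. \<forall>d. \<forall>n\<ge>1. \<forall>a>0.
        measure (PiM {..<n} (\<lambda>_. G j))
          {z \<in> space (PiM {..<n} (\<lambda>_. G j)).
             \<bar>(\<Sum>i<n. z i $ d) / real n - \<mu> j $ d\<bar> \<ge> a}
        \<le> 2 * exp (- c0 * a\<^sup>2 * real n)"
    \<comment> \<open>Algorithm 2 applied to X_1, ..., X_N (any choice of minimizers / argmin)\<close>
    and Mmax: "Mmax \<ge> 1"
    and f_pos: "\<forall>N. f N > 0"
    and out_alg: "\<forall>N\<ge>N0. \<forall>\<omega>\<in>space M.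
        alg2_output Mmax (f N) (\<beta> N) N (\<lambda>n. X N n \<omega>) (fst (out N \<omega>)) (snd (out N \<omega>))"
    \<comment> \<open>hypotheses of the lemma\<close>
    and k: "2 \<le> k" "k \<le> M0"
    and eta: "\<forall>N\<ge>N0. 1 \<le> \<eta> N \<and> \<eta> N \<le> L N (k - 1) - L N (k - 2)
                      \<and> \<eta> N \<le> L N (Suc k) - L N k"
    and C: "C > 100 * real CARD('d) / c0"
    and f_big: "\<forall>N. f N \<ge> 100 * (norm (\<mu> (k - 1) - \<mu> k))\<^sup>2 * real (\<eta> N)
                 \<and> f N \<ge> 100 * (norm (\<mu> k - \<mu> (Suc k)))\<^sup>2 * real (\<eta> N)
                 \<and> f N \<ge> C * ln (real N)"
  shows "AE \<omega> in M. eventually (\<lambda>N. \<not> (\<exists>j n1 n2 n3.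
            1 \<le> j \<and> j \<le> fst (out N \<omega>) \<and>
            1 \<le> n1 \<and> n1 \<le> L N k - L N (k - 1) \<and>
            1 \<le> n2 \<and> n2 \<le> \<eta> N \<and> 1 \<le> n3 \<and> n3 \<le> \<eta> N \<and>
            snd (out N \<omega>) (j - 1) = L N (k - 1) - n3 \<and>
            snd (out N \<omega>) j = L N (k - 1) + n1 \<and>
            snd (out N \<omega>) (Suc j) = L N k + n2)) sequentially"
proof -
  interpret prob_space M by (rule P)
  have rvm[measurable]: "\<And>N n. X N n \<in> borel_measurable M" using rv by auto
  have rvc[measurable]: "\<And>N n d. (\<lambda>\<omega>. X N n \<omega> $ d) \<in> borel_measurable M"
    by (rule measurable_compose[OF rvm borel_measurable_nth])
  define D where "D = real CARD('d)"
  have Dpos: "D > 0" by (simp add: D_def)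
  define t where "t = (\<lambda>N::nat. 4 * ln (real N) / c0)"
  define N1 where "N1 = max N0 2"
  define A where "A = (\<lambda>N::nat. \<lambda>(j'::nat, s::nat, e::nat, d::'d).
      {\<omega>\<in>space M. L N (j' - 1) < s \<and> s \<le> e \<and> e \<le> L N j' \<and>
         t N * real (e + 1 - s) < (\<Sum>i=s..e. X N i \<omega> $ d - \<mu> j' $ d)\<^sup>2})"
  define T where "T = (\<lambda>N::nat. {1..Suc M0} \<times> {1..N} \<times> {1..N} \<times> (UNIV :: 'd set))"
  define B where "B = (\<lambda>N. if N1 \<le> N then (\<Union>z\<in>T N. A N z) else {})"
  have tpos: "\<And>N. N \<ge> 2 \<Longrightarrow> t N > 0" using c0 by (simp add: t_def)
  have Lle: "\<And>N i. N \<ge> N0 \<Longrightarrow> i \<le> Suc M0 \<Longrightarrow> L N i \<le> N"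
  proof -
    fix N i assume N: "N \<ge> N0" and i: "i \<le> Suc M0"
    have "\<forall>i. i + dd \<le> Suc M0 \<longrightarrow> L N i \<le> L N (i + dd)" for dd
    proof (induction dd)
      case (Suc dd)
      show ?case
      proof (intro allI impI)
        fix i assume "i + Suc dd \<le> Suc M0"
        then have "L N i \<le> L N (i + dd)" "L N (i + dd) < L N (Suc (i + dd))"
          using Suc L_struct N by auto
        then show "L N i \<le> L N (i + Suc dd)" by simp
      qed
    qed simp
    from spec[OF this[of "Suc M0 - i"], of i] i have "L N i \<le> L N (i + (Suc M0 - i))" by simp
    then show "L N i \<le> N" using L_struct N i by simp
  qed
  have key: "\<not> (\<exists>j n1 n2 n3.
            1 \<le> j \<and> j \<le> fst (out N \<omega>) \<and>
            1 \<le> n1 \<and> n1 \<le> L N k - L N (k - 1) \<and>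
            1 \<le> n2 \<and> n2 \<le> \<eta> N \<and> 1 \<le> n3 \<and> n3 \<le> \<eta> N \<and>
            snd (out N \<omega>) (j - 1) = L N (k - 1) - n3 \<and>
            snd (out N \<omega>) j = L N (k - 1) + n1 \<and>
            snd (out N \<omega>) (Suc j) = L N k + n2)"
    if NN1: "N1 \<le> N" and w: "\<omega> \<in> space M" "\<omega> \<notin> B N" for N \<omega>
  proof
    assume "\<exists>j n1 n2 n3.
            1 \<le> j \<and> j \<le> fst (out N \<omega>) \<and>
            1 \<le> n1 \<and> n1 \<le> L N k - L N (k - 1) \<and>
            1 \<le> n2 \<and> n2 \<le> \<eta> N \<and> 1 \<le> n3 \<and> n3 \<le> \<eta> N \<and>
            snd (out N \<omega>) (j - 1) = L N (k - 1) - n3 \<and>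
            snd (out N \<omega>) j = L N (k - 1) + n1 \<and>
            snd (out N \<omega>) (Suc j) = L N k + n2"
    then obtain j n1 n2 n3 where pat: "1 \<le> j" "j \<le> fst (out N \<omega>)"
            "1 \<le> n1" "n1 \<le> L N k - L N (k - 1)"
            "1 \<le> n2" "n2 \<le> \<eta> N" "1 \<le> n3" "n3 \<le> \<eta> N"
            "snd (out N \<omega>) (j - 1) = L N (k - 1) - n3"
            "snd (out N \<omega>) j = L N (k - 1) + n1"
            "snd (out N \<omega>) (Suc j) = L N k + n2" by blast
    have NN: "N \<ge> N0" "N \<ge> 2" using NN1 by (auto simp: N1_def)
    define x where "x = (\<lambda>n. X N n \<omega>)"
    have t0: "t N > 0" using tpos NN by simp
    have good: "(norm (\<Sum>i=s..e. x i - \<mu> j'))\<^sup>2 \<le> D * t N * real (e + 1 - s)"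
      if j': "j' \<in> {1..Suc M0}" and s: "L N (j' - 1) < s" and e: "e \<le> L N j'" for j' s e
      unfolding D_def
    proof (rule vec_good)
      fix d
      show "(\<Sum>i=s..e. x i $ d - \<mu> j' $ d)\<^sup>2 \<le> t N * real (e + 1 - s)"
      proof (cases "s \<le> e")
        case False then show ?thesis by simp
      next
        case True
        have eN: "e \<le> N" using e Lle[OF NN(1), of j'] j' by auto
        have zT: "(j', s, e, d) \<in> T N" using j' s True eN by (auto simp: T_def)
        have "\<omega> \<notin> A N (j', s, e, d)" using w zT NN1 by (auto simp: B_def)
        then show ?thesis using w True s e by (auto simp: A_def x_def not_less)
      qed
    qed
    obtain sel K Mst where alg: "K \<le> Mmax"
        "\<forall>k\<le>K. valid_seg N k (sel k) \<and>
                 (\<forall>l. valid_seg N k l \<longrightarrow> seg_cost x k (sel k) \<le> seg_cost x k l)"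
        "(if \<beta> N \<le> min_seg_size K (sel K) then K = Mmax \<and> Mst = Mmax else Mst = K - 1)"
        "fst (out N \<omega>) \<le> Mst"
        "\<forall>k\<le>Mst. seg_cost x (fst (out N \<omega>)) (sel (fst (out N \<omega>))) + real (fst (out N \<omega>)) * f N
                   \<le> seg_cost x k (sel k) + real k * f N"
        "\<forall>j\<le>Suc (fst (out N \<omega>)). snd (out N \<omega>) j = sel (fst (out N \<omega>)) j"
      using out_alg NN w unfolding alg2_output_def x_def by blast
    define Mh where "Mh = fst (out N \<omega>)"
    define K' where "K' = Mh - 1"
    have MhK: "Mh = Suc K'" using pat(1,2) by (simp add: Mh_def K'_def)
    have MstK: "Mst \<le> K" using alg(3) by (auto split: if_splits)
    have MhleK: "Mh \<le> K" using alg(4) MstK by (simp add: Mh_def)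
    define l where "l = sel Mh"
    have vl: "valid_seg N (Suc K') l" using alg(2) MhleK MhK by (simp add: l_def)
    have jle: "j \<le> Suc K'" using pat(2) MhK by (simp add: Mh_def)
    define a where "a = L N (k - 1)"
    define b where "b = L N k"
    define p where "p = a - n3 + 1"
    define r where "r = a + n1"
    define q where "q = b + n2"
    have lj1: "l (j - 1) = a - n3" using alg(6) pat(9) MhK jle by (simp add: l_def Mh_def a_def)
    have lj: "l j = r" using alg(6) pat(10) MhK jle by (simp add: l_def Mh_def a_def r_def)
    have lSj: "l (Suc j) = q" using alg(6) pat(11) MhK jle by (simp add: l_def Mh_def b_def q_def)
    define l' where "l' = (\<lambda>i. if i < j then l i else l (Suc i))"
    have vl': "valid_seg N K' l'" using delete_cp(1)[OF vl pat(1) jle] by (simp add: l'_def)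
    have ident: "seg_cost x K' l' + loss_q x p r + loss_q x (Suc r) q
         = seg_cost x (Suc K') l + loss_q x p q"
      using delete_cp(2)[OF vl pat(1) jle, of x] unfolding lj1 lj lSj by (simp add: l'_def p_def)
    have opt: "seg_cost x K' (sel K') \<le> seg_cost x K' l'"
      using alg(2) vl' MhleK MhK by auto
    have pen: "seg_cost x (Suc K') l + real (Suc K') * f N \<le> seg_cost x K' (sel K') + real K' * f N"
      using alg(5) alg(4) MhK by (simp add: l_def Mh_def)
    have fle: "f N \<le> loss_q x p q - loss_q x p r - loss_q x (Suc r) q"
      using ident opt pen by (simp add: algebra_simps)
    have k1: "k - 1 \<in> {1..Suc M0}" "k \<in> {1..Suc M0}" "Suc k \<in> {1..Suc M0}" using k by auto
    have km: "k - 1 - 1 = k - 2" by simp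
    have ab: "a < b"
    proof -
      have all: "\<forall>j\<le>M0. L N j < L N (Suc j)" using L_struct NN by auto
      show ?thesis using spec[OF all, of "k - 1"] k by (simp add: a_def b_def)
    qed
    have eta': "1 \<le> \<eta> N" "\<eta> N \<le> a - L N (k - 2)" "\<eta> N \<le> L N (Suc k) - b"
      using eta NN by (auto simp: a_def b_def)
    have a2: "L N (k - 2) \<le> a" using eta' by simp
    have n3c: "n3 + L N (k - 2) \<le> a" using pat(8) eta'(2) a2 by arith
    have n3a: "n3 \<le> a" "L N (k - 1 - 1) < p" unfolding km using n3c by (auto simp: p_def)
    have rb: "r \<le> b" using pat(4) ab by (simp add: r_def a_def b_def)
    have bS: "b < L N (Suc k)"
    proof -
      have all: "\<forall>j\<le>M0. L N j < L N (Suc j)" using L_struct NN by auto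
      show ?thesis using spec[OF all, of k] k by (simp add: b_def)
    qed
    have qb: "q \<le> L N (Suc k)" using pat(6) eta'(3) bS unfolding q_def by arith
    have pr: "p \<le> r" "r < q" using n3a pat rb by (auto simp: p_def r_def q_def)
    define U1 where "U1 = (\<Sum>n=p..a. x n - \<mu> (k - 1))"
    define W1 where "W1 = (\<Sum>n=Suc a..r. x n - \<mu> k)"
    define v1 where "v1 = \<mu> (k - 1) - \<mu> k"
    have pa: "p \<le> a" "Suc a - p = n3" using n3a pat(7) by (auto simp: p_def)
    have S1: "(\<Sum>n=p..r. x n - \<mu> k) = U1 + real n3 *\<^sub>R v1 + W1"
    proof -
      have "{p..r} = {p..a} \<union> {Suc a..r}" using pa pr by (auto simp: r_def)
      then have "(\<Sum>n=p..r. x n - \<mu> k) = (\<Sum>n=p..a. x n - \<mu> k) + W1"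
        by (simp add: W1_def sum.union_disjoint[symmetric] ivl_disj_int_two)
      also have "(\<Sum>n=p..a. x n - \<mu> k) = (\<Sum>n=p..a. (x n - \<mu> (k - 1)) + v1)"
        by (rule sum.cong) (auto simp: v1_def)
      also have "\<dots> = U1 + real n3 *\<^sub>R v1"
        using pa by (simp add: sum.distrib U1_def sum_constant_scaleR del: sum_constant)
      finally show ?thesis by simp
    qed
    have U1b: "(norm U1)\<^sup>2 \<le> D * t N * real n3"
      using good[of "k - 1" p a] k1 n3a pa by (simp add: U1_def a_def)
    have W1b: "(norm W1)\<^sup>2 \<le> D * t N * real n1"
      using good[of k "Suc a" r] k1 rb by (simp add: W1_def a_def b_def r_def)
    have T1: "(norm (\<Sum>n=p..r. x n - \<mu> k))\<^sup>2 / real (r + 1 - p) \<le> 3 * (D * t N) + 3 * real n3 * (norm v1)\<^sup>2"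
    proof -
      have "real (r + 1 - p) = real n3 + real n1" using pa by (simp add: r_def)
      then show ?thesis unfolding S1
        using tri_bound[OF U1b W1b, of "real n3" v1] Dpos t0 pat(3,7) by simp
    qed
    define U2 where "U2 = (\<Sum>n=Suc r..b. x n - \<mu> k)"
    define W2 where "W2 = (\<Sum>n=Suc b..q. x n - \<mu> (Suc k))"
    define v2 where "v2 = \<mu> (Suc k) - \<mu> k"
    have S2: "(\<Sum>n=Suc r..q. x n - \<mu> k) = U2 + real n2 *\<^sub>R v2 + W2"
    proof -
      have "{Suc r..q} = {Suc r..b} \<union> {Suc b..q}" using rb by (auto simp: q_def)
      then have "(\<Sum>n=Suc r..q. x n - \<mu> k) = U2 + (\<Sum>n=Suc b..q. x n - \<mu> k)"
        by (simp add: U2_def sum.union_disjoint[symmetric] ivl_disj_int_two)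
      also have "(\<Sum>n=Suc b..q. x n - \<mu> k) = (\<Sum>n=Suc b..q. (x n - \<mu> (Suc k)) + v2)"
        by (rule sum.cong) (auto simp: v2_def)
      also have "\<dots> = W2 + real n2 *\<^sub>R v2"
        by (simp add: sum.distrib W2_def sum_constant_scaleR q_def del: sum_constant)
      finally show ?thesis by simp
    qed
    have U2b: "(norm U2)\<^sup>2 \<le> D * t N * real (b - r)"
      using good[of k "Suc r" b] k1 rb by (simp add: U2_def a_def b_def r_def)
    have W2b: "(norm W2)\<^sup>2 \<le> D * t N * real n2"
      using good[of "Suc k" "Suc b" q] k1 qb by (simp add: W2_def b_def q_def)
    have T2: "(norm (\<Sum>n=Suc r..q. x n - \<mu> k))\<^sup>2 / real (q + 1 - Suc r) \<le> 3 * (D * t N) + 3 * real n2 * (norm v2)\<^sup>2"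
    proof -
      have "real (q + 1 - Suc r) = real (b - r) + real n2" using rb by (simp add: q_def)
      then show ?thesis unfolding S2
        using tri_bound[OF U2b W2b, of "real n2" v2] Dpos t0 pat(5) by simp
    qed
    have mb: "loss_q x p q \<le> loss_q x p r + loss_q x (Suc r) q
     + (norm (\<Sum>n\<in>{p..r}. x n - \<mu> k))\<^sup>2 / real (r + 1 - p)
     + (norm (\<Sum>n\<in>{Suc r..q}. x n - \<mu> k))\<^sup>2 / real (q + 1 - Suc r)"
      by (rule merge_bound[OF pr])
    have fb: "f N \<le> 6 * (D * t N) + 3 * real n3 * (norm v1)\<^sup>2 + 3 * real n2 * (norm v2)\<^sup>2"
      using lin4[OF fle mb T1 T2] by simp
    have fb1: "real n3 * (norm v1)\<^sup>2 \<le> real (\<eta> N) * (norm v1)\<^sup>2"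
      using pat(8) by (intro mult_right_mono) auto
    have fb2: "real n2 * (norm v2)\<^sup>2 \<le> real (\<eta> N) * (norm v2)\<^sup>2"
      using pat(6) by (intro mult_right_mono) auto
    have fv1: "100 * (real (\<eta> N) * (norm v1)\<^sup>2) \<le> f N"
      using f_big by (simp add: v1_def mult.commute mult.left_commute)
    have fv2: "100 * (real (\<eta> N) * (norm v2)\<^sup>2) \<le> f N"
      using f_big by (simp add: v2_def norm_minus_commute mult.commute mult.left_commute)
    have lnp: "ln (real N) > 0" using NN by simp
    have DC: "D / c0 < C / 100" using C c0 by (simp add: D_def mult.commute)
    have Dt: "D * t N = 4 * (D / c0) * ln (real N)" by (simp add: t_def)
    have Dt2: "4 * (D / c0) * ln (real N) \<le> 4 * (C / 100) * ln (real N)"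
      using DC lnp by (intro mult_right_mono mult_left_mono) auto
    have fC: "C * ln (real N) \<le> f N" using f_big by simp
    show False using fb fb1 fb2 fv1 fv2 Dt Dt2 fC f_pos[rule_format, of N] by linarith
  qed

  have Ameas: "A N z \<in> sets M" for N z
  proof -
    obtain j' s e d where z: "z = (j', s, e, d)" by (cases z) auto
    have fm: "(\<lambda>\<omega>. (\<Sum>i=s..e. X N i \<omega> $ d - \<mu> j' $ d)\<^sup>2) \<in> borel_measurable M"
      by measurable
    have "A N z = (if L N (j' - 1) < s \<and> s \<le> e \<and> e \<le> L N j' then
       {\<omega>\<in>space M. t N * real (e + 1 - s) < (\<Sum>i=s..e. X N i \<omega> $ d - \<mu> j' $ d)\<^sup>2} else {})"
      by (auto simp: A_def z)
    then show ?thesis using fm by simp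
  qed
  have Bmeas: "B N \<in> sets M" for N
    unfolding B_def using Ameas by (auto simp: T_def)
  have Abound: "measure M (A N z) \<le> 2 * exp (- c0 * t N)" if N: "N1 \<le> N" and zT: "z \<in> T N" for N z
  proof -
    obtain j' s e d where z: "z = (j', s, e, d)" by (cases z) auto
    have j': "j' \<in> {1..Suc M0}" using zT by (simp add: T_def z)
    have NN: "N \<ge> N0" "N \<ge> 2" using N by (auto simp: N1_def)
    show ?thesis
    proof (cases "L N (j' - 1) < s \<and> s \<le> e \<and> e \<le> L N j'")
      case True
      have Aeq: "A N z = {\<omega>\<in>space M. t N * real (e + 1 - s) < (\<Sum>i=s..e. X N i \<omega> $ d - \<mu> j' $ d)\<^sup>2}"
        using True by (auto simp: A_def z)
      have eN: "e \<le> N" using True Lle[OF NN(1), of j'] j' by auto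
      show ?thesis unfolding Aeq
      proof (rule block_prob[where I="{1..N}" and G="G j'"])
        show "prob_space M" by (rule P)
        show "\<And>n. X N n \<in> borel_measurable M" by (rule rvm)
        show "indep_vars (\<lambda>_. borel) (X N) {1..N}" using indep NN by auto
        show "{s..e} \<subseteq> {1..N}" using True eN by auto
        show "s \<le> e" using True by simp
        show "\<And>n. n \<in> {s..e} \<Longrightarrow> distr M borel (X N n) = G j'"
          using distr_X NN j' True by auto
        show "\<And>n a. n \<ge> 1 \<Longrightarrow> a > 0 \<Longrightarrow>
          measure (PiM {..<n} (\<lambda>_. G j'))
            {z \<in> space (PiM {..<n} (\<lambda>_. G j')). \<bar>(\<Sum>i<n. z i $ d) / real n - \<mu> j' $ d\<bar> \<ge> a}
          \<le> 2 * exp (- c0 * a\<^sup>2 * real n)"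
          using subgauss j' by blast
        show "t N > 0" using tpos NN by simp
      qed
    next
      case False
      then have "A N z = {}" by (auto simp: A_def z)
      then show ?thesis by simp
    qed
  qed
  have Bbound: "measure M (B N) \<le> 2 * real (Suc M0) * D / (real N)\<^sup>2" for N
  proof (cases "N1 \<le> N")
    case True
    have NN: "N \<ge> 2" using True by (auto simp: N1_def)
    have ex: "exp (- c0 * t N) = 1 / (real N)^4"
    proof -
      have "- c0 * t N = - ln ((real N)^4)" using c0 NN by (simp add: t_def ln_realpow)
      then show ?thesis using NN by (simp add: exp_minus inverse_eq_divide)
    qed
    have "measure M (B N) = measure M (\<Union>z\<in>T N. A N z)" using True by (simp add: B_def)
    also have "\<dots> \<le> (\<Sum>z\<in>T N. measure M (A N z))"
      by (rule measure_UNION_le) (auto simp: T_def Ameas)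
    also have "\<dots> \<le> (\<Sum>z\<in>T N. 2 * exp (- c0 * t N))"
      by (rule sum_mono) (rule Abound[OF True])
    also have "\<dots> = real (Suc M0 * N * N * CARD('d)) * (2 / (real N)^4)"
      unfolding ex by (simp add: T_def card_cartesian_product algebra_simps)
    also have "\<dots> = 2 * real (Suc M0) * D / (real N)\<^sup>2"
      using NN by (simp add: D_def field_simps power2_eq_square power4_eq_xxxx)
    finally show ?thesis .
  next
    case False
    then show ?thesis using Dpos by (simp add: B_def)
  qed
  have summ: "summable (\<lambda>N. measure M (B N))"
  proof (rule summable_comparison_test)
    show "\<exists>N0. \<forall>n\<ge>N0. norm (measure M (B n)) \<le> 2 * real (Suc M0) * D * inverse ((real n)^2)"
      using Bbound by (simp add: divide_inverse)
    show "summable (\<lambda>n. 2 * real (Suc M0) * D * inverse ((real n)^2))"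
      by (rule summable_mult, rule inverse_power_summable) simp
  qed
  have "AE \<omega> in M. eventually (\<lambda>N. \<omega> \<in> space M - B N) sequentially"
    by (rule borel_cantelli_AE1[OF Bmeas]) (simp_all add: emeasure_eq_measure summ)
  then show ?thesis
  proof (rule AE_mp, intro AE_I2 impI)
    fix \<omega> assume "\<omega> \<in> space M" and ev: "eventually (\<lambda>N. \<omega> \<in> space M - B N) sequentially"
    show "eventually (\<lambda>N. \<not> (\<exists>j n1 n2 n3.
            1 \<le> j \<and> j \<le> fst (out N \<omega>) \<and>
            1 \<le> n1 \<and> n1 \<le> L N k - L N (k - 1) \<and>
            1 \<le> n2 \<and> n2 \<le> \<eta> N \<and> 1 \<le> n3 \<and> n3 \<le> \<eta> N \<and>
            snd (out N \<omega>) (j - 1) = L N (k - 1) - n3 \<and>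
            snd (out N \<omega>) j = L N (k - 1) + n1 \<and>
            snd (out N \<omega>) (Suc j) = L N k + n2)) sequentially"
      using eventually_conj[OF ev eventually_ge_at_top[of N1]]
      by (rule eventually_mono) (use key in blast)
  qed
qed

end
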